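(* Let $\mathcal{P}$ and $\mathcal{N}$ be disjoint finite index sets (positives and negatives) with $|\mathcal{P}|\ge1$, with real logits $(s_i)_{i\in\mathcal{P}\cup\mathcal{N}}$ and, for $i\in\mathcal{P}$, values $\mathrm{IoU}_i\in[0,1]$, and fix $\delta\ge0$. The bucketed algorithm described in the context computes all Bucketed AP Loss gradients (respectively all Bucketed RS Loss gradients) $g_i$, $i\in\mathcal{P}\cup\mathcal{N}$, in time $\mathcal{O}\big(\max\big((|\mathcal{P}|+|\mathcal{N}|)\log(|\mathcal{P}|+|\mathcal{N}|),\,|\mathcal{P}|^2\big)\big)$.
   Context: Smoothed step function: $H(x)=0$ for $x<-\delta$, $H(x)=\frac{x}{2\delta}+\frac12$ for $-\delta\le x\le\delta$, $H(x)=1$ for $x>\delta$ (for $\delta=0$: $H(x)=1$ if $x>0$, $0$ if $x<0$). $x_{ij}=s_j-s_i$. Ratios with zero denominator are taken as $0$. Buckets: sort all logits decreasingly; the positives appear as $\hat s^+_1\ge\dots\ge\hat s^+_{|\mathcal{P}|}$; $B_1$ is the set of negatives above $\hat s^+_1$, $B_k$ the negatives between $\hat s^+_{k-1}$ and $\hat s^+_k$, $B_{|\mathcal{P}|+1}$ the negatives below $\hat s^+_{|\mathcal{P}|}$ (so there are at most $|\mathcal{P}|+1$ buckets); $b_k=|B_k|$; for nonempty $B_k$ the prototype logit $s^b_k$ is the mean logit of $B_k$ and $x^b_{ik}=s^b_k-s_i$. For $i\in\mathcal{P}$: $N^b_{FP}(i)=\sum_kH(x^b_{ik})b_k$, $\ell^b_R(i)=\frac{N^b_{FP}(i)}{\sum_{j\in\mathcal{P}}H(x_{ij})+N^b_{FP}(i)}$,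 $p(k^b|i)=b_kH(x^b_{ik})/N^b_{FP}(i)$; $\mathrm{rank}^+(i)=\sum_{j\in\mathcal{P}}H(x_{ij})$; sorting error $\ell_S(i)=\frac{1}{\mathrm{rank}^+(i)}\sum_{j\in\mathcal{P}}H(x_{ij})(1-\mathrm{IoU}_j)$; target sorting error $\ell^*_S(i)=\frac{\sum_{j\in\mathcal{P}}H(x_{ij})[\mathrm{IoU}_j\ge\mathrm{IoU}_i](1-\mathrm{IoU}_j)}{\sum_{j\in\mathcal{P}}H(x_{ij})[\mathrm{IoU}_j\ge\mathrm{IoU}_i]}$; sorting pmf $p_S(j|i)=\frac{H(x_{ij})[\mathrm{IoU}_j<\mathrm{IoU}_i]}{\sum_{k\in\mathcal{P}}H(x_{ik})[\mathrm{IoU}_k<\mathrm{IoU}_i]}$. Bucketed AP gradients: $g_i=-\frac{1}{|\mathcal{P}|}\ell^b_R(i)$ for $i\in\mathcal{P}$, and $g_i=\frac{1}{|\mathcal{P}|}\sum_{j\in\mathcal{P}}\ell^b_R(j)p(k^b|j)\frac{1}{b_k}$ for a negative $i\in B_k$. Bucketed RS gradients: same for negatives, and for $i\in\mathcal{P}$, $g_i=\frac{1}{|\mathcal{P}|}\big(-\ell^b_R(i)+\ell^*_S(i)-\ell_S(i)+\sum_{j\in\mathcal{P}}(\ell_S(j)-\ell^*_S(j))p_S(i|j)\big)$. The bucketed algorithm: (1) sort all logits; (2) form the buckets and prototype logits in one pass; (3) compute all $x^b_{ik}$, $i\in\mathcal{P}$, over prototypes; (4) compute $\ell^b_R(i)$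 for all $i\in\mathcal{P}$; (5) compute the primary terms $\ell^b_R(i)p(k^b|i)$ for all positive/prototype pairs; (6)–(8) (RS only) compute $\ell_S,\ell^*_S$ and the positive–positive terms $(\ell_S(i)-\ell^*_S(i))p_S(j|i)$; (9)–(10) sum primary terms to get the gradients of positives and of each prototype; (11) divide each prototype's gradient by $b_k$ and assign it to every negative of $B_k$; (12) normalize by $|\mathcal{P}|$. *)

theory Defs
  imports Complex_Main "HOL-Library.Time_Functions"
begin

text \<open>Smoothed step function H with parameter d (= delta).  For d = 0 the value at 0 is
  taken to be 1/2 (the common value of the formula x/(2d)+1/2 at x = 0).\<close>
definition Hstep :: "real \<Rightarrow> real \<Rightarrow> real" where
  "Hstep d x = (if x < 0 - d then 0 else if d < x then 1
               else if d = 0 then 1/2 else x / (2 * d) + 1/2)"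

text \<open>Bucket index of a negative n: it lies below exactly the positives with logit \<ge> s n
  (ties between a negative and a positive put the negative below the positive).\<close>
definition bidx :: "'a set \<Rightarrow> ('a \<Rightarrow> real) \<Rightarrow> 'a \<Rightarrow> nat" where
  "bidx P s n = 1 + card {i \<in> P. s n \<le> s i}"

definition bucket :: "'a set \<Rightarrow> 'a set \<Rightarrow> ('a \<Rightarrow> real) \<Rightarrow> nat \<Rightarrow> 'a set" where
  "bucket P N s k = {n \<in> N. bidx P s n = k}"

definition bsize :: "'a set \<Rightarrow> 'a set \<Rightarrow> ('a \<Rightarrow> real) \<Rightarrow> nat \<Rightarrow> real" where
  "bsize P N s k = real (card (bucket P N s k))"

definition proto :: "'a set \<Rightarrow> 'a set \<Rightarrow> ('a \<Rightarrow> real) \<Rightarrow> nat \<Rightarrow> real" where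
  "proto P N s k = (\<Sum>n\<in>bucket P N s k. s n) / bsize P N s k"

definition NFPb :: "real \<Rightarrow> 'a set \<Rightarrow> 'a set \<Rightarrow> ('a \<Rightarrow> real) \<Rightarrow> 'a \<Rightarrow> real" where
  "NFPb d P N s i = (\<Sum>k\<in>{1..card P + 1}. Hstep d (proto P N s k - s i) * bsize P N s k)"

definition rankpos :: "real \<Rightarrow> 'a set \<Rightarrow> ('a \<Rightarrow> real) \<Rightarrow> 'a \<Rightarrow> real" where
  "rankpos d P s i = (\<Sum>j\<in>P. Hstep d (s j - s i))"

definition lRb :: "real \<Rightarrow> 'a set \<Rightarrow> 'a set \<Rightarrow> ('a \<Rightarrow> real) \<Rightarrow> 'a \<Rightarrow> real" where
  "lRb d P N s i = NFPb d P N s i / (rankpos d P s i + NFPb d P N s i)"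

definition pkb :: "real \<Rightarrow> 'a set \<Rightarrow> 'a set \<Rightarrow> ('a \<Rightarrow> real) \<Rightarrow> nat \<Rightarrow> 'a \<Rightarrow> real" where
  "pkb d P N s k i = bsize P N s k * Hstep d (proto P N s k - s i) / NFPb d P N s i"

definition iv :: "bool \<Rightarrow> real" where
  "iv b = (if b then 1 else 0)"

definition lS :: "real \<Rightarrow> 'a set \<Rightarrow> ('a \<Rightarrow> real) \<Rightarrow> ('a \<Rightarrow> real) \<Rightarrow> 'a \<Rightarrow> real" where
  "lS d P s iou i = (\<Sum>j\<in>P. Hstep d (s j - s i) * (1 - iou j)) / rankpos d P s i"

definition lSt :: "real \<Rightarrow> 'a set \<Rightarrow> ('a \<Rightarrow> real) \<Rightarrow> ('a \<Rightarrow> real) \<Rightarrow> 'a \<Rightarrow> real" where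
  "lSt d P s iou i =
     (\<Sum>j\<in>P. Hstep d (s j - s i) * iv (iou i \<le> iou j) * (1 - iou j)) /
     (\<Sum>j\<in>P. Hstep d (s j - s i) * iv (iou i \<le> iou j))"

definition pS :: "real \<Rightarrow> 'a set \<Rightarrow> ('a \<Rightarrow> real) \<Rightarrow> ('a \<Rightarrow> real) \<Rightarrow> 'a \<Rightarrow> 'a \<Rightarrow> real" where
  "pS d P s iou j i =
     Hstep d (s j - s i) * iv (iou j < iou i) / (\<Sum>k\<in>P. Hstep d (s k - s i) * iv (iou k < iou i))"

definition gneg :: "real \<Rightarrow> 'a set \<Rightarrow> 'a set \<Rightarrow> ('a \<Rightarrow> real) \<Rightarrow> 'a \<Rightarrow> real" where
  "gneg d P N s n = (let k = bidx P s n in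
      (1 / real (card P)) * (\<Sum>j\<in>P. lRb d P N s j * pkb d P N s k j * (1 / bsize P N s k)))"

definition gAP :: "real \<Rightarrow> 'a set \<Rightarrow> 'a set \<Rightarrow> ('a \<Rightarrow> real) \<Rightarrow> 'a \<Rightarrow> real" where
  "gAP d P N s x = (if x \<in> P then - (1 / real (card P)) * lRb d P N s x else gneg d P N s x)"

definition gRS :: "real \<Rightarrow> 'a set \<Rightarrow> 'a set \<Rightarrow> ('a \<Rightarrow> real) \<Rightarrow> ('a \<Rightarrow> real) \<Rightarrow> 'a \<Rightarrow> real" where
  "gRS d P N s iou x = (if x \<in> P then
      (1 / real (card P)) * (- lRb d P N s x + lSt d P s iou x - lS d P s iou x
         + (\<Sum>j\<in>P. (lS d P s iou j - lSt d P s iou j) * pS d P s iou x j))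
    else gneg d P N s x)"

section \<open>The bucketed algorithm, as a functional program\<close>

text \<open>Items: (index, logit, is_positive, IoU).  Positives: (index, logit, IoU).
  Negatives: (index, logit).  Buckets: (b_k, prototype logit).\<close>


fun before :: "'a \<times> real \<times> bool \<times> real \<Rightarrow> 'a \<times> real \<times> bool \<times> real \<Rightarrow> bool" where
  "before (i, s, p, u) (j, t, q, v) = (t < s \<or> (s = t \<and> p))"

fun merge :: "('a \<times> real \<times> bool \<times> real) list \<Rightarrow> ('a \<times> real \<times> bool \<times> real) list \<Rightarrow>
              ('a \<times> real \<times> bool \<times> real) list" where
  "merge [] ys = ys"
| "merge xs [] = xs"
| "merge (x # xs) (y # ys) = (if before y x then y # merge (x # xs) ys else x # merge xs (y # ys))"

fun msort :: "('a \<times> real \<times> bool \<times> real) list \<Rightarrow> ('a \<times> real \<times> bool \<times> real) list" where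
  "msort xs = (let n = length xs in
     if n \<le> 1 then xs else merge (msort (take (n div 2) xs)) (msort (drop (n div 2) xs)))"

fun tagP :: "('a \<times> real \<times> real) list \<Rightarrow> ('a \<times> real \<times> bool \<times> real) list" where
  "tagP [] = []"
| "tagP ((i, s, u) # xs) = (i, s, True, u) # tagP xs"

fun tagN :: "('a \<times> real) list \<Rightarrow> ('a \<times> real \<times> bool \<times> real) list" where
  "tagN [] = []"
| "tagN ((i, s) # xs) = (i, s, False, 0) # tagN xs"

text \<open>Step (2): one pass over the sorted list forming buckets (reversed) and positives (reversed).\<close>
fun split_pass :: "('a \<times> real \<times> bool \<times> real) list \<Rightarrow> real \<Rightarrow> real \<Rightarrow> (real \<times> real) list \<Rightarrow>
     ('a \<times> real \<times> real) list \<Rightarrow> (real \<times> real) list \<times> ('a \<times> real \<times> real) list" where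
  "split_pass [] b t bs ps = ((b, t / b) # bs, ps)"
| "split_pass ((i, s, p, u) # xs) b t bs ps =
     (if p then split_pass xs 0 0 ((b, t / b) # bs) ((i, s, u) # ps)
      else split_pass xs (b + 1) (t + s) bs ps)"

fun rlen :: "'b list \<Rightarrow> real" where
  "rlen [] = 0"
| "rlen (x # xs) = rlen xs + 1"

fun zeros :: "'b list \<Rightarrow> real list" where
  "zeros [] = []"
| "zeros (x # xs) = 0 # zeros xs"

fun nfp :: "real \<Rightarrow> real \<Rightarrow> (real \<times> real) list \<Rightarrow> real" where
  "nfp d si [] = 0"
| "nfp d si ((b, m) # bs) = Hstep d (m - si) * b + nfp d si bs"

fun rankp :: "real \<Rightarrow> real \<Rightarrow> ('a \<times> real \<times> real) list \<Rightarrow> real" where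
  "rankp d si [] = 0"
| "rankp d si ((j, sj, uj) # ps) = Hstep d (sj - si) + rankp d si ps"

definition lRf :: "real \<Rightarrow> real \<Rightarrow> (real \<times> real) list \<Rightarrow> ('a \<times> real \<times> real) list \<Rightarrow> real" where
  "lRf d si bs ps = nfp d si bs / (rankp d si ps + nfp d si bs)"

text \<open>Step (5)/(10): add the primary terms of one positive to the prototype accumulators.\<close>
fun addprim :: "real \<Rightarrow> real \<Rightarrow> real \<Rightarrow> (real \<times> real) list \<Rightarrow> real list \<Rightarrow> real list" where
  "addprim d si c ((b, m) # bs) (g # gs) = (g + c * (b * Hstep d (m - si))) # addprim d si c bs gs"
| "addprim d si c bs gs = gs"

fun accum :: "real \<Rightarrow> (real \<times> real) list \<Rightarrow> ('a \<times> real \<times> real) list \<Rightarrow> ('a \<times> real \<times> real) list \<Rightarrow>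
              real list \<Rightarrow> real list" where
  "accum d bs allps [] G = G"
| "accum d bs allps ((i, si, ui) # qs) G =
     accum d bs allps qs (addprim d si (lRf d si bs allps / nfp d si bs) bs G)"

text \<open>Steps (11)/(12) for negatives: walk the sorted list, moving to the next bucket at each positive.\<close>
fun assign :: "real \<Rightarrow> ('a \<times> real \<times> bool \<times> real) list \<Rightarrow> (real \<times> real) list \<Rightarrow> real list \<Rightarrow>
               ('a \<times> real) list" where
  "assign np ((i, s, p, u) # xs) ((b, m) # bs) (g # gs) =
     (if p then assign np xs bs gs else (i, g / (b * np)) # assign np xs ((b, m) # bs) (g # gs))"
| "assign np xs bs gs = []"

fun posAP :: "real \<Rightarrow> real \<Rightarrow> (real \<times> real) list \<Rightarrow> ('a \<times> real \<times> real) list \<Rightarrow>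
              ('a \<times> real \<times> real) list \<Rightarrow> ('a \<times> real) list" where
  "posAP d np bs allps [] = []"
| "posAP d np bs allps ((i, si, ui) # qs) = (i, (0 - lRf d si bs allps) / np) # posAP d np bs allps qs"

fun sortnum :: "real \<Rightarrow> real \<Rightarrow> ('a \<times> real \<times> real) list \<Rightarrow> real" where
  "sortnum d si [] = 0"
| "sortnum d si ((j, sj, uj) # ps) = Hstep d (sj - si) * (1 - uj) + sortnum d si ps"

fun tnum :: "real \<Rightarrow> real \<Rightarrow> real \<Rightarrow> ('a \<times> real \<times> real) list \<Rightarrow> real" where
  "tnum d si ui [] = 0"
| "tnum d si ui ((j, sj, uj) # ps) = Hstep d (sj - si) * iv (ui \<le> uj) * (1 - uj) + tnum d si ui ps"

fun tden :: "real \<Rightarrow> real \<Rightarrow> real \<Rightarrow> ('a \<times> real \<times> real) list \<Rightarrow> real" where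
  "tden d si ui [] = 0"
| "tden d si ui ((j, sj, uj) # ps) = Hstep d (sj - si) * iv (ui \<le> uj) + tden d si ui ps"

fun pden :: "real \<Rightarrow> real \<Rightarrow> real \<Rightarrow> ('a \<times> real \<times> real) list \<Rightarrow> real" where
  "pden d sj uj [] = 0"
| "pden d sj uj ((k, sk, uk) # ps) = Hstep d (sk - sj) * iv (uk < uj) + pden d sj uj ps"

definition lSf :: "real \<Rightarrow> real \<Rightarrow> ('a \<times> real \<times> real) list \<Rightarrow> real" where
  "lSf d si ps = sortnum d si ps / rankp d si ps"

definition lStf :: "real \<Rightarrow> real \<Rightarrow> real \<Rightarrow> ('a \<times> real \<times> real) list \<Rightarrow> real" where
  "lStf d si ui ps = tnum d si ui ps / tden d si ui ps"

text \<open>Steps (6)-(8): per positive j: (s_j, IoU_j, l_S(j) - l*_S(j), denominator of p_S(.|j)).\<close>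
fun mkQ :: "real \<Rightarrow> ('a \<times> real \<times> real) list \<Rightarrow> ('a \<times> real \<times> real) list \<Rightarrow>
            (real \<times> real \<times> real \<times> real) list" where
  "mkQ d allps [] = []"
| "mkQ d allps ((j, sj, uj) # qs) =
     (sj, uj, lSf d sj allps - lStf d sj uj allps, pden d sj uj allps) # mkQ d allps qs"

fun cross :: "real \<Rightarrow> real \<Rightarrow> real \<Rightarrow> (real \<times> real \<times> real \<times> real) list \<Rightarrow> real" where
  "cross d si ui [] = 0"
| "cross d si ui ((sj, uj, e, D) # qs) = e * (Hstep d (si - sj) * iv (ui < uj) / D) + cross d si ui qs"

fun posRS :: "real \<Rightarrow> real \<Rightarrow> (real \<times> real) list \<Rightarrow> ('a \<times> real \<times> real) list \<Rightarrow>
              (real \<times> real \<times> real \<times> real) list \<Rightarrow> ('a \<times> real \<times> real) list \<Rightarrow> ('a \<times> real) list" where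
  "posRS d np bs allps Q [] = []"
| "posRS d np bs allps Q ((i, si, ui) # qs) =
     (i, (0 - lRf d si bs allps + lStf d si ui allps - lSf d si allps + cross d si ui Q) / np)
       # posRS d np bs allps Q qs"

definition bucketed_AP :: "real \<Rightarrow> ('a \<times> real \<times> real) list \<Rightarrow> ('a \<times> real) list \<Rightarrow> ('a \<times> real) list" where
  "bucketed_AP d ps ns =
    (let L = msort (tagP ps @ tagN ns);
         r = split_pass L 0 0 [] [];
         bs = itrev (fst r) [];
         P = itrev (snd r) [];
         np = rlen P;
         G = accum d bs P P (zeros bs)
     in posAP d np bs P P @ assign np L bs G)"

definition bucketed_RS :: "real \<Rightarrow> ('a \<times> real \<times> real) list \<Rightarrow> ('a \<times> real) list \<Rightarrow> ('a \<times> real) list" where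
  "bucketed_RS d ps ns =
    (let L = msort (tagP ps @ tagN ns);
         r = split_pass L 0 0 [] [];
         bs = itrev (fst r) [];
         P = itrev (snd r) [];
         np = rlen P;
         G = accum d bs P P (zeros bs);
         Q = mkQ d P P
     in posRS d np bs P Q P @ assign np L bs G)"

section \<open>Step-counting running-time functions\<close>

text \<open>Written by hand following the translation of the HOL-Library time framework:
  every call of a user-defined function costs 1 plus the cost of evaluating its body,
  where the cost of a call is the sum of the costs of its arguments and of the callee;
  real arithmetic, comparisons, constructors, and the Boolean connectives cost 0.
  The library time functions T_length, T_take, T_drop, T_append, T_itrev, T_fst, T_snd
  of HOL-Library.Time_Functions are reused.\<close>

definition T_Hstep :: "real \<Rightarrow> real \<Rightarrow> nat" where "T_Hstep d x = 1"
definition T_iv :: "bool \<Rightarrow> nat" where "T_iv b = 1"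
definition T_before :: "'a \<times> real \<times> bool \<times> real \<Rightarrow> 'a \<times> real \<times> bool \<times> real \<Rightarrow> nat" where
  "T_before x y = 1"

fun T_merge :: "('a \<times> real \<times> bool \<times> real) list \<Rightarrow> ('a \<times> real \<times> bool \<times> real) list \<Rightarrow> nat" where
  "T_merge [] ys = 1"
| "T_merge xs [] = 1"
| "T_merge (x # xs) (y # ys) = T_before y x +
     (if before y x then T_merge (x # xs) ys else T_merge xs (y # ys)) + 1"

fun T_msort :: "('a \<times> real \<times> bool \<times> real) list \<Rightarrow> nat" where
  "T_msort xs = T_length xs + (let n = length xs in
     if n \<le> 1 then 0
     else T_take (n div 2) xs + T_drop (n div 2) xs
          + T_msort (take (n div 2) xs) + T_msort (drop (n div 2) xs)
          + T_merge (msort (take (n div 2) xs)) (msort (drop (n div 2) xs))) + 1"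

fun T_tagP :: "('a \<times> real \<times> real) list \<Rightarrow> nat" where
  "T_tagP [] = 1"
| "T_tagP (x # xs) = T_tagP xs + 1"

fun T_tagN :: "('a \<times> real) list \<Rightarrow> nat" where
  "T_tagN [] = 1"
| "T_tagN (x # xs) = T_tagN xs + 1"

fun T_split_pass :: "('a \<times> real \<times> bool \<times> real) list \<Rightarrow> real \<Rightarrow> real \<Rightarrow> (real \<times> real) list \<Rightarrow>
     ('a \<times> real \<times> real) list \<Rightarrow> nat" where
  "T_split_pass [] b t bs ps = 1"
| "T_split_pass ((i, s, p, u) # xs) b t bs ps =
     (if p then T_split_pass xs 0 0 ((b, t / b) # bs) ((i, s, u) # ps)
      else T_split_pass xs (b + 1) (t + s) bs ps) + 1"

fun T_rlen :: "'b list \<Rightarrow> nat" where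
  "T_rlen [] = 1"
| "T_rlen (x # xs) = T_rlen xs + 1"

fun T_zeros :: "'b list \<Rightarrow> nat" where
  "T_zeros [] = 1"
| "T_zeros (x # xs) = T_zeros xs + 1"

fun T_nfp :: "real \<Rightarrow> real \<Rightarrow> (real \<times> real) list \<Rightarrow> nat" where
  "T_nfp d si [] = 1"
| "T_nfp d si ((b, m) # bs) = T_Hstep d (m - si) + T_nfp d si bs + 1"

fun T_rankp :: "real \<Rightarrow> real \<Rightarrow> ('a \<times> real \<times> real) list \<Rightarrow> nat" where
  "T_rankp d si [] = 1"
| "T_rankp d si ((j, sj, uj) # ps) = T_Hstep d (sj - si) + T_rankp d si ps + 1"

definition T_lRf :: "real \<Rightarrow> real \<Rightarrow> (real \<times> real) list \<Rightarrow> ('a \<times> real \<times> real) list \<Rightarrow> nat" where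
  "T_lRf d si bs ps = T_nfp d si bs + T_rankp d si ps + T_nfp d si bs + 1"

fun T_addprim :: "real \<Rightarrow> real \<Rightarrow> real \<Rightarrow> (real \<times> real) list \<Rightarrow> real list \<Rightarrow> nat" where
  "T_addprim d si c ((b, m) # bs) (g # gs) = T_Hstep d (m - si) + T_addprim d si c bs gs + 1"
| "T_addprim d si c bs gs = 1"

fun T_accum :: "real \<Rightarrow> (real \<times> real) list \<Rightarrow> ('a \<times> real \<times> real) list \<Rightarrow> ('a \<times> real \<times> real) list \<Rightarrow>
              real list \<Rightarrow> nat" where
  "T_accum d bs allps [] G = 1"
| "T_accum d bs allps ((i, si, ui) # qs) G =
     T_lRf d si bs allps + T_nfp d si bs
     + T_addprim d si (lRf d si bs allps / nfp d si bs) bs G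
     + T_accum d bs allps qs (addprim d si (lRf d si bs allps / nfp d si bs) bs G) + 1"

fun T_assign :: "real \<Rightarrow> ('a \<times> real \<times> bool \<times> real) list \<Rightarrow> (real \<times> real) list \<Rightarrow> real list \<Rightarrow> nat" where
  "T_assign np ((i, s, p, u) # xs) ((b, m) # bs) (g # gs) =
     (if p then T_assign np xs bs gs else T_assign np xs ((b, m) # bs) (g # gs)) + 1"
| "T_assign np xs bs gs = 1"

fun T_posAP :: "real \<Rightarrow> real \<Rightarrow> (real \<times> real) list \<Rightarrow> ('a \<times> real \<times> real) list \<Rightarrow>
              ('a \<times> real \<times> real) list \<Rightarrow> nat" where
  "T_posAP d np bs allps [] = 1"
| "T_posAP d np bs allps ((i, si, ui) # qs) = T_lRf d si bs allps + T_posAP d np bs allps qs + 1"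

fun T_sortnum :: "real \<Rightarrow> real \<Rightarrow> ('a \<times> real \<times> real) list \<Rightarrow> nat" where
  "T_sortnum d si [] = 1"
| "T_sortnum d si ((j, sj, uj) # ps) = T_Hstep d (sj - si) + T_sortnum d si ps + 1"

fun T_tnum :: "real \<Rightarrow> real \<Rightarrow> real \<Rightarrow> ('a \<times> real \<times> real) list \<Rightarrow> nat" where
  "T_tnum d si ui [] = 1"
| "T_tnum d si ui ((j, sj, uj) # ps) = T_Hstep d (sj - si) + T_iv (ui \<le> uj) + T_tnum d si ui ps + 1"

fun T_tden :: "real \<Rightarrow> real \<Rightarrow> real \<Rightarrow> ('a \<times> real \<times> real) list \<Rightarrow> nat" where
  "T_tden d si ui [] = 1"
| "T_tden d si ui ((j, sj, uj) # ps) = T_Hstep d (sj - si) + T_iv (ui \<le> uj) + T_tden d si ui ps + 1"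

fun T_pden :: "real \<Rightarrow> real \<Rightarrow> real \<Rightarrow> ('a \<times> real \<times> real) list \<Rightarrow> nat" where
  "T_pden d sj uj [] = 1"
| "T_pden d sj uj ((k, sk, uk) # ps) = T_Hstep d (sk - sj) + T_iv (uk < uj) + T_pden d sj uj ps + 1"

definition T_lSf :: "real \<Rightarrow> real \<Rightarrow> ('a \<times> real \<times> real) list \<Rightarrow> nat" where
  "T_lSf d si ps = T_sortnum d si ps + T_rankp d si ps + 1"

definition T_lStf :: "real \<Rightarrow> real \<Rightarrow> real \<Rightarrow> ('a \<times> real \<times> real) list \<Rightarrow> nat" where
  "T_lStf d si ui ps = T_tnum d si ui ps + T_tden d si ui ps + 1"

fun T_mkQ :: "real \<Rightarrow> ('a \<times> real \<times> real) list \<Rightarrow> ('a \<times> real \<times> real) list \<Rightarrow> nat" where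
  "T_mkQ d allps [] = 1"
| "T_mkQ d allps ((j, sj, uj) # qs) =
     T_lSf d sj allps + T_lStf d sj uj allps + T_pden d sj uj allps + T_mkQ d allps qs + 1"

fun T_cross :: "real \<Rightarrow> real \<Rightarrow> real \<Rightarrow> (real \<times> real \<times> real \<times> real) list \<Rightarrow> nat" where
  "T_cross d si ui [] = 1"
| "T_cross d si ui ((sj, uj, e, D) # qs) = T_Hstep d (si - sj) + T_iv (ui < uj) + T_cross d si ui qs + 1"

fun T_posRS :: "real \<Rightarrow> real \<Rightarrow> (real \<times> real) list \<Rightarrow> ('a \<times> real \<times> real) list \<Rightarrow>
              (real \<times> real \<times> real \<times> real) list \<Rightarrow> ('a \<times> real \<times> real) list \<Rightarrow> nat" where
  "T_posRS d np bs allps Q [] = 1"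
| "T_posRS d np bs allps Q ((i, si, ui) # qs) =
     T_lRf d si bs allps + T_lStf d si ui allps + T_lSf d si allps + T_cross d si ui Q
     + T_posRS d np bs allps Q qs + 1"

definition T_bucketed_AP :: "real \<Rightarrow> ('a \<times> real \<times> real) list \<Rightarrow> ('a \<times> real) list \<Rightarrow> nat" where
  "T_bucketed_AP d ps ns =
    (let tP = tagP ps; tN = tagN ns; A = tP @ tN; L = msort A;
         r = split_pass L 0 0 [] [];
         bs = itrev (fst r) [];
         P = itrev (snd r) [];
         np = rlen P;
         Z = zeros bs;
         G = accum d bs P P Z;
         out1 = posAP d np bs P P;
         out2 = assign np L bs G
     in T_tagP ps + T_tagN ns + T_append tP tN + T_msort A
        + T_split_pass L 0 0 [] [] + T_fst r + T_itrev (fst r) [] + T_snd r + T_itrev (snd r) []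
        + T_rlen P + T_zeros bs + T_accum d bs P P Z + T_posAP d np bs P P
        + T_assign np L bs G + T_append out1 out2 + 1)"

definition T_bucketed_RS :: "real \<Rightarrow> ('a \<times> real \<times> real) list \<Rightarrow> ('a \<times> real) list \<Rightarrow> nat" where
  "T_bucketed_RS d ps ns =
    (let tP = tagP ps; tN = tagN ns; A = tP @ tN; L = msort A;
         r = split_pass L 0 0 [] [];
         bs = itrev (fst r) [];
         P = itrev (snd r) [];
         np = rlen P;
         Z = zeros bs;
         G = accum d bs P P Z;
         Q = mkQ d P P;
         out1 = posRS d np bs P Q P;
         out2 = assign np L bs G
     in T_tagP ps + T_tagN ns + T_append tP tN + T_msort A
        + T_split_pass L 0 0 [] [] + T_fst r + T_itrev (fst r) [] + T_snd r + T_itrev (snd r) []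
        + T_rlen P + T_zeros bs + T_accum d bs P P Z + T_mkQ d P P + T_posRS d np bs P Q P
        + T_assign np L bs G + T_append out1 out2 + 1)"

end

theory Submission
  imports Defs "HOL-Library.Multiset"
begin


declare msort.simps[simp del] T_msort.simps[simp del]

definition R :: "'a \<times> real \<times> bool \<times> real \<Rightarrow> 'a \<times> real \<times> bool \<times> real \<Rightarrow> bool" where
  "R x y = (fst (snd y) < fst (snd x) \<or> (fst (snd x) = fst (snd y) \<and> (fst (snd (snd x)) \<or> \<not> fst (snd (snd y)))))"

lemma R_trans: "R x y \<Longrightarrow> R y z \<Longrightarrow> R x z"
  unfolding R_def by auto

lemma before_R: "before y x \<Longrightarrow> R y x"
  by (cases x; cases y) (auto simp: R_def)

lemma nbefore_R: "\<not> before y x \<Longrightarrow> R x y"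
  by (cases x; cases y) (auto simp: R_def)

lemma mset_merge[simp]: "mset (merge xs ys) = mset xs + mset ys"
  by (induction xs ys rule: merge.induct) auto

lemma set_merge[simp]: "set (merge xs ys) = set xs \<union> set ys"
  by (metis mset_merge set_mset_mset set_mset_union)

lemma sorted_merge:
  "sorted_wrt R xs \<Longrightarrow> sorted_wrt R ys \<Longrightarrow> sorted_wrt R (merge xs ys)"
proof (induction xs ys rule: merge.induct)
  case (3 x xs y ys)
  show ?case
  proof (cases "before y x")
    case True
    then have "R y x" by (rule before_R)
    then have "\<forall>z\<in>set (x # xs). R y z" using 3(3) by (auto intro: R_trans)
    then show ?thesis using 3 True by auto
  next
    case False
    then have "R x y" by (rule nbefore_R)
    then have "\<forall>z\<in>set (y # ys). R x z" using 3(4) by (auto intro: R_trans)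
    then show ?thesis using 3 False by auto
  qed
qed auto

lemma mset_msort[simp]: "mset (msort xs) = mset xs"
proof (induction xs rule: msort.induct)
  case (1 xs)
  show ?case
    apply (subst msort.simps)
    using 1 by (auto simp: Let_def simp flip: mset_append)
qed

lemma length_msort[simp]: "length (msort xs) = length xs"
  by (metis mset_msort size_mset)

lemma sorted_short: "length xs \<le> 1 \<Longrightarrow> sorted_wrt R xs"
  by (cases xs) auto

lemma sorted_msort: "sorted_wrt R (msort xs)"
proof (induction xs rule: msort.induct)
  case (1 xs)
  show ?case
    apply (subst msort.simps)
    using 1 by (auto simp: Let_def sorted_short intro!: sorted_merge)
qed

lemma T_merge_le: "T_merge xs ys \<le> 2 * (length xs + length ys) + 1"
  by (induction xs ys rule: T_merge.induct) (auto simp: T_before_def)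

lemma arith1: "h \<le> (r::nat) \<Longrightarrow> 2 \<le> h + r \<Longrightarrow> (h+r+1) + ((h+1)+(h+1) + (7*h*k' + 3*h) + (7*r*k'+3*r) + (2*(h+r)+1)) + 1 \<le> 7*(h+r)*Suc k' + 3*(h+r)"
  by (simp add: algebra_simps)

lemma T_msort_bound:
  "length xs \<ge> 1 \<Longrightarrow> length xs \<le> 2 ^ k \<Longrightarrow> T_msort xs \<le> 7 * length xs * k + 3 * length xs"
proof (induction xs arbitrary: k rule: T_msort.induct)
  case (1 xs)
  define n where "n = length xs"
  show ?case
  proof (cases "n \<le> 1")
    case True
    show ?thesis
    proof -
      have "length xs = 1" using True 1(3) by (simp add: n_def)
      then show ?thesis by (subst T_msort.simps) (simp add: T_length)
    qed
  next
    case False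
    then obtain k' where k: "k = Suc k'" using 1(4) unfolding n_def[symmetric]
      by (cases k) auto
    have a: "length (take (n div 2) xs) \<le> 2 ^ k'" "length (take (n div 2) xs) \<ge> 1"
      using 1(4) False k by (auto simp: n_def)
    have b: "length (drop (n div 2) xs) \<le> 2 ^ k'" "length (drop (n div 2) xs) \<ge> 1"
      using 1(4) False k by (auto simp: n_def)
    have IH1: "T_msort (take (n div 2) xs) \<le> 7 * (n div 2) * k' + 3 * (n div 2)"
    proof -
      have "length (take (n div 2) xs) = n div 2" by (simp add: n_def)
      then show ?thesis using 1(1)[of n k'] a False by (simp add: n_def)
    qed
    have IH2: "T_msort (drop (n div 2) xs) \<le> 7 * (n - n div 2) * k' + 3 * (n - n div 2)"
      using 1(2)[of n k'] b False by (auto simp: n_def)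
    have M: "T_merge (msort (take (n div 2) xs)) (msort (drop (n div 2) xs)) \<le> 2 * n + 1"
    proof -
      have "length (take (n div 2) xs) + length (drop (n div 2) xs) = n" by (simp add: n_def)
      then show ?thesis
        using T_merge_le[of "msort (take (n div 2) xs)" "msort (drop (n div 2) xs)"] by simp
    qed
    have "T_msort xs = (n + 1) + (T_take (n div 2) xs + T_drop (n div 2) xs
          + T_msort (take (n div 2) xs) + T_msort (drop (n div 2) xs)
          + T_merge (msort (take (n div 2) xs)) (msort (drop (n div 2) xs))) + 1"
      apply (subst T_msort.simps) using False by (simp add: n_def T_length Let_def)
    also have "\<dots> \<le> (n + 1) + ((n div 2 + 1) + (n div 2 + 1) + (7 * (n div 2) * k' + 3 * (n div 2))
          + (7 * (n - n div 2) * k' + 3 * (n - n div 2)) + (2 * n + 1)) + 1"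
      using IH1 IH2 M by (simp add: T_take T_drop n_def)
    also have "\<dots> \<le> 7 * n * k + 3 * n"
    proof -
      have nr: "n div 2 \<le> n - n div 2" "2 \<le> n div 2 + (n - n div 2)" "n = n div 2 + (n - n div 2)"
        using False by auto
      show ?thesis using arith1[OF nr(1,2), of k'] unfolding k by (subst (1 2 3 4 5 6 7 8) nr(3)) simp
    qed
    finally show ?thesis by (simp add: n_def)
  qed
qed



definition posl :: "('a \<times> real \<times> bool \<times> real) list \<Rightarrow> ('a \<times> real \<times> real) list" where
  "posl L = map (\<lambda>(i,s,p,u). (i,s,u)) (filter (\<lambda>x. fst (snd (snd x))) L)"
definition negs :: "('a \<times> real \<times> bool \<times> real) list \<Rightarrow> ('a \<times> real) list" where
  "negs L = map (\<lambda>(i,s,p,u). (i,s)) (filter (\<lambda>x. \<not> fst (snd (snd x))) L)"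
definition cnt :: "('a \<times> real \<times> bool \<times> real) list \<Rightarrow> real \<Rightarrow> nat" where
  "cnt L sx = length (filter (\<lambda>(i,s,u). sx \<le> s) (posl L))"
definition SS :: "('a \<times> real \<times> bool \<times> real) list \<Rightarrow> nat \<Rightarrow> ('a \<times> real) list" where
  "SS L k = filter (\<lambda>(x,sx). cnt L sx = k) (negs L)"
definition st :: "real \<Rightarrow> real \<Rightarrow> ('a \<times> real) list \<Rightarrow> real \<times> real" where
  "st b t S = (b + real (length S), (t + sum_list (map snd S)) / (b + real (length S)))"

lemma posl_simps[simp]: "posl [] = []"
  "posl ((i,s,True,u) # xs) = (i,s,u) # posl xs"
  "posl ((i,s,False,u) # xs) = posl xs"
  by (auto simp: posl_def)

lemma negs_simps[simp]: "negs [] = []"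
  "negs ((i,s,True,u) # xs) = negs xs"
  "negs ((i,s,False,u) # xs) = (i,s) # negs xs"
  by (auto simp: negs_def)

lemma snd_split_pass: "snd (split_pass L b t bs ps) = rev (posl L) @ ps"
proof (induction L arbitrary: b t bs ps)
  case (Cons a L)
  obtain i s p u where a: "a = (i,s,p,u)" by (cases a) auto
  show ?case using Cons by (cases p) (auto simp: a)
qed simp

lemma sorted_pos_neg: "sorted_wrt R ((i,s,True,u) # xs) \<Longrightarrow> (x,sx) \<in> set (negs xs) \<Longrightarrow> sx \<le> s"
  by (auto simp: negs_def R_def)

lemma sorted_neg_pos: "sorted_wrt R ((i,s,False,u) # xs) \<Longrightarrow> (x,sx,ux) \<in> set (posl xs) \<Longrightarrow> sx < s"
  by (auto simp: posl_def R_def)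

lemma fst_split_pass: "sorted_wrt R L \<Longrightarrow>
  fst (split_pass L b t bs ps) = rev (st b t (SS L 0) # map (\<lambda>k. st 0 0 (SS L k)) [1..<length (posl L) + 1]) @ bs"
proof (induction L arbitrary: b t bs ps)
  case Nil
  then show ?case by (simp add: st_def SS_def)
next
  case (Cons a xs)
  obtain i s p u where a: "a = (i,s,p,u)" by (cases a) auto
  have sxs: "sorted_wrt R xs" using Cons(2) by simp
  show ?case
  proof (cases p)
    case True
    have c: "cnt (a # xs) sx = Suc (cnt xs sx)" if "(x,sx) \<in> set (negs xs)" for x sx
      using sorted_pos_neg[of i s u xs x sx] Cons(2) that True by (simp add: a cnt_def)
    have S0: "SS (a # xs) 0 = []" using c True by (auto simp: SS_def a filter_empty_conv)
    have SSuc: "SS (a # xs) (Suc k) = SS xs k" for k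
      unfolding SS_def using c True by (auto simp: a intro!: filter_cong)
    have up: "[1..<length (posl xs) + 2] = map Suc [0..<length (posl xs) + 1]"
      by (simp add: map_Suc_upt)
    have up2: "[0..<length (posl xs) + 1] = 0 # [1..<length (posl xs) + 1]"
      by (simp add: upt_rec)
    have m: "map (\<lambda>k. st 0 0 (SS (a # xs) k)) [1..<length (posl xs) + 2]
      = st 0 0 (SS xs 0) # map (\<lambda>k. st 0 0 (SS xs k)) [1..<length (posl xs) + 1]"
    proof -
      have "map (\<lambda>k. st 0 0 (SS (a # xs) k)) [1..<length (posl xs) + 2]
          = map (\<lambda>k. st 0 0 (SS xs k)) [0..<length (posl xs) + 1]"
        unfolding up by (simp del: upt_Suc add: SSuc)
      also have "\<dots> = st 0 0 (SS xs 0) # map (\<lambda>k. st 0 0 (SS xs k)) [1..<length (posl xs) + 1]"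
        by (simp del: upt_Suc add: upt_conv_Cons)
      finally show ?thesis .
    qed
    have pl: "length (posl (a # xs)) = length (posl xs) + 1" using True by (simp add: a)
    have e: "st b t (SS (a # xs) 0) = (b, t / b)" by (simp add: S0 st_def)
    have "fst (split_pass (a # xs) b t bs ps) = fst (split_pass xs 0 0 ((b, t / b) # bs) ((i, s, u) # ps))"
      using True by (simp add: a)
    also have "\<dots> = rev (st b t (SS (a # xs) 0) # map (\<lambda>k. st 0 0 (SS (a # xs) k)) [1..<length (posl (a # xs)) + 1]) @ bs"
    proof -
      have m2: "map (\<lambda>k. st 0 0 (SS (a # xs) k)) [1..<length (posl (a # xs)) + 1]
        = st 0 0 (SS xs 0) # map (\<lambda>k. st 0 0 (SS xs k)) [1..<length (posl xs) + 1]"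
        by (simp only: pl m one_add_one add.assoc)
      show ?thesis unfolding Cons.IH[OF sxs] e m2 by (simp del: upt_Suc)
    qed
    finally show ?thesis .
  next
    case False
    have a': "a = (i,s,False,u)" using False a by simp
    have c0: "cnt ((i,s,False,u) # xs) s = 0"
    proof -
      have "\<forall>y\<in>set (posl xs). \<not> (case y of (i',s',u') \<Rightarrow> s \<le> s')"
        using sorted_neg_pos[of i s u xs] Cons(2) False by (force simp: a)
      then show ?thesis using False by (simp add: a cnt_def filter_empty_conv)
    qed
    have c: "cnt ((i,s,False,u) # xs) sx = cnt xs sx" for sx
      by (simp add: cnt_def)
    have S0: "SS (a # xs) 0 = (i,s) # SS xs 0" using c0 False by (auto simp: SS_def a' c)
    have "1 \<le> k \<Longrightarrow> SS (a # xs) k = SS xs k" for k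
      unfolding SS_def using c0 by (auto simp: a' c)
    then have m: "map (\<lambda>k. st 0 0 (SS (a # xs) k)) [1..<length (posl xs) + 1]
       = map (\<lambda>k. st 0 0 (SS xs k)) [1..<length (posl xs) + 1]" by auto
    have eq: "st b t ((i, s) # SS xs 0) = st (b + 1) (t + s) (SS xs 0)"
      by (simp add: st_def algebra_simps)
    have plen: "length (posl (a # xs)) = length (posl xs)" by (simp add: a')
    have "fst (split_pass (a # xs) b t bs ps) = fst (split_pass xs (b+1) (t+s) bs ps)"
      by (simp add: a')
    also have "\<dots> = rev (st (b+1) (t+s) (SS xs 0) # map (\<lambda>k. st 0 0 (SS xs k)) [1..<length (posl xs)+1]) @ bs"
      by (rule Cons.IH[OF sxs])
    also have "\<dots> = rev (st b t (SS (a # xs) 0) # map (\<lambda>k. st 0 0 (SS (a # xs) k)) [1..<length (posl (a # xs))+1]) @ bs"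
      unfolding plen S0 m eq by (rule refl)
    finally show ?thesis .
  qed
qed

lemma assign_eq: "sorted_wrt R L \<Longrightarrow> j + length (posl L) < length bs \<Longrightarrow> length G = length bs \<Longrightarrow>
  assign np L (drop j bs) (drop j G) =
    map (\<lambda>(x,sx). (x, G ! (j + cnt L sx) / (fst (bs ! (j + cnt L sx)) * np))) (negs L)"
proof (induction L arbitrary: j)
  case Nil
  then show ?case by simp
next
  case (Cons a xs)
  obtain i s p u where a: "a = (i,s,p,u)" by (cases a) auto
  have sxs: "sorted_wrt R xs" using Cons(2) by simp
  obtain b m where bm: "bs ! j = (b, m)" by (cases "bs ! j") auto
  have d1: "drop j bs = (b,m) # drop (Suc j) bs" using Cons(3) bm
    by (metis Cons_nth_drop_Suc add_lessD1)
  have d2: "drop j G = G ! j # drop (Suc j) G" using Cons(3,4)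
    by (metis Cons_nth_drop_Suc add_lessD1)
  show ?case
  proof (cases p)
    case True
    have c: "cnt (a # xs) sx = Suc (cnt xs sx)" if "(x,sx) \<in> set (negs xs)" for x sx
      using sorted_pos_neg[of i s u xs x sx] Cons(2) that True by (simp add: a cnt_def)
    have IH: "assign np xs (drop (Suc j) bs) (drop (Suc j) G) =
      map (\<lambda>(x,sx). (x, G ! (Suc j + cnt xs sx) / (fst (bs ! (Suc j + cnt xs sx)) * np))) (negs xs)"
      using Cons.IH[OF sxs, of "Suc j"] Cons(3,4) True by (simp add: a)
    show ?thesis using True IH c by (simp add: a d1 d2) auto
  next
    case False
    have a': "a = (i,s,False,u)" using False a by simp
    have c0: "cnt ((i,s,False,u) # xs) s = 0"
    proof -
      have "\<forall>y\<in>set (posl xs). \<not> (case y of (i',s',u') \<Rightarrow> s \<le> s')"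
        using sorted_neg_pos[of i s u xs] Cons(2) False by (force simp: a)
      then show ?thesis using False by (simp add: a cnt_def filter_empty_conv)
    qed
    have c: "cnt ((i,s,False,u) # xs) sx = cnt xs sx" for sx
      by (simp add: cnt_def)
    have IH: "assign np xs (drop j bs) (drop j G) =
      map (\<lambda>(x,sx). (x, G ! (j + cnt xs sx) / (fst (bs ! (j + cnt xs sx)) * np))) (negs xs)"
      using Cons.IH[OF sxs, of j] Cons(3,4) False by (simp add: a)
    show ?thesis using IH c0 c bm by (simp add: a' d1 d2)
  qed
qed



lemma addprim_len[simp]: "length (addprim d si c bs G) = length G"
  by (induction d si c bs G rule: addprim.induct) auto

lemma addprim_nth: "length bs = length G \<Longrightarrow> k < length G \<Longrightarrow>
  addprim d si c bs G ! k = G ! k + c * (fst (bs ! k) * Hstep d (snd (bs ! k) - si))"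
proof (induction d si c bs G arbitrary: k rule: addprim.induct)
  case (1 d si c b m bs g gs)
  then show ?case by (cases k) auto
qed auto

lemma accum_len[simp]: "length (accum d bs allps qs G) = length G"
  by (induction d bs allps qs G rule: accum.induct) auto

lemma accum_nth: "length bs = length G \<Longrightarrow> k < length G \<Longrightarrow>
  accum d bs allps qs G ! k = G ! k + sum_list (map (\<lambda>(i,si,ui).
     lRf d si bs allps / nfp d si bs * (fst (bs ! k) * Hstep d (snd (bs ! k) - si))) qs)"
  by (induction d bs allps qs G rule: accum.induct) (auto simp: addprim_nth)


lemma nfp_eq: "nfp d si bs = sum_list (map (\<lambda>(b,m). Hstep d (m - si) * b) bs)"
  by (induction d si bs rule: nfp.induct) auto
lemma rankp_eq: "rankp d si ps = sum_list (map (\<lambda>(j,sj,uj). Hstep d (sj - si)) ps)"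
  by (induction d si ps rule: rankp.induct) auto
lemma sortnum_eq: "sortnum d si ps = sum_list (map (\<lambda>(j,sj,uj). Hstep d (sj - si) * (1 - uj)) ps)"
  by (induction d si ps rule: sortnum.induct) auto
lemma tnum_eq: "tnum d si ui ps = sum_list (map (\<lambda>(j,sj,uj). Hstep d (sj - si) * iv (ui \<le> uj) * (1 - uj)) ps)"
  by (induction d si ui ps rule: tnum.induct) auto
lemma tden_eq: "tden d si ui ps = sum_list (map (\<lambda>(j,sj,uj). Hstep d (sj - si) * iv (ui \<le> uj)) ps)"
  by (induction d si ui ps rule: tden.induct) auto
lemma pden_eq: "pden d sj uj ps = sum_list (map (\<lambda>(k,sk,uk). Hstep d (sk - sj) * iv (uk < uj)) ps)"
  by (induction d sj uj ps rule: pden.induct) auto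
lemma cross_eq: "cross d si ui Q = sum_list (map (\<lambda>(sj,uj,e,D). e * (Hstep d (si - sj) * iv (ui < uj) / D)) Q)"
  by (induction d si ui Q rule: cross.induct) auto
lemma mkQ_eq: "mkQ d allps qs = map (\<lambda>(j,sj,uj). (sj, uj, lSf d sj allps - lStf d sj uj allps, pden d sj uj allps)) qs"
  by (induction d allps qs rule: mkQ.induct) auto
lemma posAP_eq: "posAP d np bs allps qs = map (\<lambda>(i,si,ui). (i, (0 - lRf d si bs allps) / np)) qs"
  by (induction d np bs allps qs rule: posAP.induct) auto
lemma posRS_eq: "posRS d np bs allps Q qs = map (\<lambda>(i,si,ui).
   (i, (0 - lRf d si bs allps + lStf d si ui allps - lSf d si allps + cross d si ui Q) / np)) qs"
  by (induction d np bs allps Q qs rule: posRS.induct) auto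
lemma rlen_eq: "rlen xs = real (length xs)"
  by (induction xs) auto
lemma zeros_eq: "zeros xs = replicate (length xs) 0"
  by (induction xs) auto


lemma tagP_eq: "tagP ps = map (\<lambda>(i,s,u). (i,s,True,u)) ps"
  by (induction ps rule: tagP.induct) auto
lemma tagN_eq: "tagN ns = map (\<lambda>(i,s). (i,s,False,0)) ns"
  by (induction ns rule: tagN.induct) auto
lemma posl_tag: "posl (tagP ps @ tagN ns) = ps"
  by (simp add: posl_def tagP_eq tagN_eq filter_map o_def case_prod_unfold)
lemma negs_tag: "negs (tagP ps @ tagN ns) = ns"
  by (simp add: negs_def tagP_eq tagN_eq filter_map o_def case_prod_unfold)
lemma mset_posl: "mset xs = mset ys \<Longrightarrow> mset (posl xs) = mset (posl ys)"
  unfolding posl_def by simp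
lemma mset_negs: "mset xs = mset ys \<Longrightarrow> mset (negs xs) = mset (negs ys)"
  unfolding negs_def by simp
lemma msum: "mset xs = mset ys \<Longrightarrow> sum_list (map (f :: _ \<Rightarrow> 'b::comm_monoid_add) xs) = sum_list (map f ys)"
proof -
  assume a: "mset xs = mset ys"
  have "sum_list (map f xs) = sum_mset (mset (map f xs))" by (rule sum_mset_sum_list[symmetric])
  also have "\<dots> = sum_mset (mset (map f ys))" unfolding mset_map a ..
  also have "\<dots> = sum_list (map f ys)" by (rule sum_mset_sum_list)
  finally show ?thesis .
qed
lemma mlen_filter: "mset xs = mset ys \<Longrightarrow> length (filter Q xs) = length (filter Q ys)"
proof -
  assume a: "mset xs = mset ys"
  have "length (filter Q xs) = size (mset (filter Q xs))" by (rule size_mset[symmetric])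
  also have "\<dots> = size (mset (filter Q ys))" unfolding mset_filter a ..
  also have "\<dots> = length (filter Q ys)" by (rule size_mset)
  finally show ?thesis .
qed
lemma dsum: "distinct pl \<Longrightarrow> sum_list (map f (map g pl)) = (\<Sum>i\<in>set pl. f (g i))"
  by (simp add: sum_list_distinct_conv_sum_set)
lemma dlen: "distinct pl \<Longrightarrow> length (filter Q (map g pl)) = card {i\<in>set pl. Q (g i)}"
proof -
  assume "distinct pl"
  then have "distinct (filter (Q \<circ> g) pl)" by simp
  then have "card (set (filter (Q \<circ> g) pl)) = length (filter (Q \<circ> g) pl)" by (rule distinct_card)
  then show ?thesis by (simp add: filter_map)
qed


lemma T_nfp_eq: "T_nfp d si bs = 2 * length bs + 1"
  by (induction d si bs rule: T_nfp.induct) (auto simp: T_Hstep_def)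
lemma T_rankp_eq: "T_rankp d si ps = 2 * length ps + 1"
  by (induction d si ps rule: T_rankp.induct) (auto simp: T_Hstep_def)
lemma T_addprim_le: "T_addprim d si c bs G \<le> 2 * length bs + 1"
  by (induction d si c bs G rule: T_addprim.induct) (auto simp: T_Hstep_def)
lemma T_sortnum_eq: "T_sortnum d si ps = 2 * length ps + 1"
  by (induction d si ps rule: T_sortnum.induct) (auto simp: T_Hstep_def)
lemma T_tnum_eq: "T_tnum d si ui ps = 3 * length ps + 1"
  by (induction d si ui ps rule: T_tnum.induct) (auto simp: T_Hstep_def T_iv_def)
lemma T_tden_eq: "T_tden d si ui ps = 3 * length ps + 1"
  by (induction d si ui ps rule: T_tden.induct) (auto simp: T_Hstep_def T_iv_def)
lemma T_pden_eq: "T_pden d si ui ps = 3 * length ps + 1"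
  by (induction d si ui ps rule: T_pden.induct) (auto simp: T_Hstep_def T_iv_def)
lemma T_cross_eq: "T_cross d si ui Q = 3 * length Q + 1"
  by (induction d si ui Q rule: T_cross.induct) (auto simp: T_Hstep_def T_iv_def)
lemma T_assign_le: "T_assign np xs bs G \<le> length xs + 1"
  by (induction np xs bs G rule: T_assign.induct) auto
lemma T_split_pass_eq: "T_split_pass L b t bs ps = length L + 1"
  by (induction L b t bs ps rule: T_split_pass.induct) auto
lemma T_tagP_eq: "T_tagP xs = length xs + 1"
  by (induction xs) auto
lemma T_tagN_eq: "T_tagN xs = length xs + 1"
  by (induction xs) auto
lemma T_rlen_eq: "T_rlen xs = length xs + 1"
  by (induction xs) auto
lemma T_zeros_eq: "T_zeros xs = length xs + 1"
  by (induction xs) auto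
lemma T_lRf_eq: "T_lRf d si bs ps = 4 * length bs + 2 * length ps + 4"
  by (simp add: T_lRf_def T_nfp_eq T_rankp_eq)
lemma T_lSf_eq: "T_lSf d si ps = 4 * length ps + 3"
  by (simp add: T_lSf_def T_sortnum_eq T_rankp_eq)
lemma T_lStf_eq: "T_lStf d si ui ps = 6 * length ps + 3"
  by (simp add: T_lStf_def T_tnum_eq T_tden_eq)

lemma T_accum_le: "T_accum d bs allps qs G \<le> length qs * (8 * length bs + 2 * length allps + 7) + 1"
proof (induction d bs allps qs G rule: T_accum.induct)
  case (2 d bs allps i si ui qs G)
  have A: "T_addprim d si (lRf d si bs allps / nfp d si bs) bs G \<le> 2 * length bs + 1"
    by (rule T_addprim_le)
  show ?case using 2 A by (simp add: T_lRf_eq T_nfp_eq)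
qed simp

lemma T_posAP_le: "T_posAP d np bs allps qs \<le> length qs * (4 * length bs + 2 * length allps + 5) + 1"
  by (induction d np bs allps qs rule: T_posAP.induct) (auto simp: T_lRf_eq)

lemma T_mkQ_le: "T_mkQ d allps qs \<le> length qs * (13 * length allps + 8) + 1"
  by (induction d allps qs rule: T_mkQ.induct) (auto simp: T_lSf_eq T_lStf_eq T_pden_eq)

lemma T_posRS_le: "T_posRS d np bs allps Q qs \<le>
   length qs * (4 * length bs + 12 * length allps + 3 * length Q + 12) + 1"
  by (induction d np bs allps Q qs rule: T_posRS.induct) (auto simp: T_lRf_eq T_lSf_eq T_lStf_eq T_cross_eq)



lemma alg: "(\<Sum>j\<in>P. a j / N j * (b * h j)) / (b * n) = (1 / n) * (\<Sum>j\<in>P. a j * (b * h j / N j) * (1 / (b::real)))"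
  by (simp add: sum_divide_distrib sum_distrib_left divide_inverse mult_ac)

lemma alg2: "(0 - a + b - c + x) / n = (1 / (n::real)) * (- a + b - c + x)"
  by simp

lemma main:
  fixes P N :: "'a set" and s iou :: "'a \<Rightarrow> real" and d :: real and pl nl :: "'a list"
  assumes finP: "finite P" and finN: "finite N" and disj: "P \<inter> N = {}" and cP: "card P \<ge> 1"
    and dpl: "distinct pl" and spl: "set pl = P" and dnl: "distinct nl" and snl: "set nl = N"
  defines "ps \<equiv> map (\<lambda>i. (i, s i, iou i)) pl" and "ns \<equiv> map (\<lambda>i. (i, s i)) nl"
  shows "distinct (map fst (bucketed_AP d ps ns)) \<and> set (map fst (bucketed_AP d ps ns)) = P \<union> N \<and>
         (\<forall>(x, g) \<in> set (bucketed_AP d ps ns). g = gAP d P N s x) \<and>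
         distinct (map fst (bucketed_RS d ps ns)) \<and> set (map fst (bucketed_RS d ps ns)) = P \<union> N \<and>
         (\<forall>(x, g) \<in> set (bucketed_RS d ps ns). g = gRS d P N s iou x)"
proof -
  define L where "L = msort (tagP ps @ tagN ns)"
  define r where "r = split_pass L 0 0 [] []"
  define bs where "bs = itrev (fst r) []"
  define Pl where "Pl = itrev (snd r) []"
  define np where "np = rlen Pl"
  define G where "G = accum d bs Pl Pl (zeros bs)"
  define Q where "Q = mkQ d Pl Pl"
  define m where "m = card P"
  have AP: "bucketed_AP d ps ns = posAP d np bs Pl Pl @ assign np L bs G"
    by (simp add: bucketed_AP_def Let_def L_def r_def bs_def Pl_def np_def G_def)
  have RS: "bucketed_RS d ps ns = posRS d np bs Pl Q Pl @ assign np L bs G"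
    by (simp add: bucketed_RS_def Let_def L_def r_def bs_def Pl_def np_def G_def Q_def)
  have sL: "sorted_wrt R L" by (simp add: L_def sorted_msort)
  have mL: "mset L = mset (tagP ps @ tagN ns)" by (simp add: L_def)
  have Pl_eq: "Pl = posl L" by (simp add: Pl_def r_def snd_split_pass itrev_Nil)
  have mPl: "mset Pl = mset ps" using mset_posl[OF mL] by (simp add: Pl_eq posl_tag)
  have mNg: "mset (negs L) = mset ns" using mset_negs[OF mL] by (simp add: negs_tag)
  have lenPl: "length Pl = m"
    using mPl dpl spl by (metis distinct_card length_map m_def ps_def size_mset)
  have setPl: "set Pl = set ps" using mPl by (metis set_mset_mset)
  have SP: "sum_list (map F Pl) = (\<Sum>j\<in>P. F (j, s j, iou j))" for F :: "'a \<times> real \<times> real \<Rightarrow> real"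
    using msum[OF mPl, of F] dsum[OF dpl, of F] by (simp add: ps_def spl)
  have cntL: "cnt L x = card {i\<in>P. x \<le> s i}" for x
  proof -
    have "cnt L x = length (filter (\<lambda>(i,s,u). x \<le> s) Pl)" by (simp add: cnt_def Pl_eq)
    also have "\<dots> = length (filter (\<lambda>(i,s,u). x \<le> s) ps)" by (rule mlen_filter[OF mPl])
    also have "\<dots> = card {i\<in>P. x \<le> s i}" unfolding ps_def by (subst dlen[OF dpl]) (simp add: spl)
    finally show ?thesis .
  qed
  have SSk: "st 0 0 (SS L k) = (bsize P N s (Suc k), proto P N s (Suc k))" for k
  proof -
    have bk: "bucket P N s (Suc k) = {n\<in>N. card {i\<in>P. s n \<le> s i} = k}"
      by (auto simp: bucket_def bidx_def)
    have l: "length (SS L k) = card (bucket P N s (Suc k))"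
    proof -
      have "length (SS L k) = length (filter (\<lambda>(x,sx). cnt L sx = k) ns)"
        unfolding SS_def by (rule mlen_filter[OF mNg])
      also have "\<dots> = card (bucket P N s (Suc k))" unfolding ns_def bk
        by (subst dlen[OF dnl]) (simp add: snl cntL)
      finally show ?thesis .
    qed
    have sm: "sum_list (map snd (SS L k)) = (\<Sum>n\<in>bucket P N s (Suc k). s n)"
    proof -
      have "sum_list (map snd (SS L k)) = sum_list (map (\<lambda>y. if (\<lambda>(x,sx). cnt L sx = k) y then snd y else 0) (negs L))"
        unfolding SS_def by (rule sum_list_map_filter')
      also have "\<dots> = sum_list (map (\<lambda>y. if (\<lambda>(x,sx). cnt L sx = k) y then snd y else 0) ns)"
        by (rule msum[OF mNg])
      also have "\<dots> = (\<Sum>n\<in>N. if card {i\<in>P. s n \<le> s i} = k then s n else 0)"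
        unfolding ns_def by (subst dsum[OF dnl]) (auto simp: snl cntL intro!: sum.cong)
      also have "\<dots> = (\<Sum>n\<in>bucket P N s (Suc k). s n)"
        unfolding bk by (rule sum.inter_filter[OF finN, symmetric])
      finally show ?thesis .
    qed
    show ?thesis by (simp add: st_def l sm bsize_def proto_def)
  qed
  have bs_eq: "bs = map (\<lambda>k. (bsize P N s (Suc k), proto P N s (Suc k))) [0..<m+1]"
  proof -
    have "bs = st 0 0 (SS L 0) # map (\<lambda>k. st 0 0 (SS L k)) [1..<m + 1]"
      by (simp add: bs_def r_def itrev_Nil fst_split_pass[OF sL] Pl_eq[symmetric] lenPl del: upt_Suc)
    also have "\<dots> = map (\<lambda>k. st 0 0 (SS L k)) [0..<m+1]"
      by (simp del: upt_Suc add: upt_conv_Cons)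
    finally show ?thesis by (simp only: SSk)
  qed
  have lenbs: "length bs = m + 1" by (simp add: bs_eq)
  have bs_nth: "k \<le> m \<Longrightarrow> bs ! k = (bsize P N s (Suc k), proto P N s (Suc k))" for k
    unfolding bs_eq by (simp del: upt_Suc)
  have nfpE: "nfp d x bs = (\<Sum>k\<in>{1..m+1}. Hstep d (proto P N s k - x) * bsize P N s k)" for x
  proof -
    have "nfp d x bs = sum_list (map (\<lambda>k. Hstep d (proto P N s (Suc k) - x) * bsize P N s (Suc k)) [0..<m+1])"
      by (simp add: nfp_eq bs_eq o_def del: upt_Suc)
    also have "\<dots> = (\<Sum>k\<in>{0..<m+1}. Hstep d (proto P N s (Suc k) - x) * bsize P N s (Suc k))"
      by (simp only: sum_set_upt_conv_sum_list_nat[symmetric] set_upt)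
    also have "\<dots> = (\<Sum>k\<in>{Suc 0..<Suc (m+1)}. Hstep d (proto P N s k - x) * bsize P N s k)"
      by (rule sum.shift_bounds_Suc_ivl[symmetric])
    also have "{Suc 0..<Suc (m+1)} = {1..m+1}" by auto
    finally show ?thesis .
  qed
  have NFPE: "nfp d (s i) bs = NFPb d P N s i" for i
    by (simp add: nfpE NFPb_def m_def)
  have rankE: "rankp d (s i) Pl = rankpos d P s i" for i
    by (simp add: rankp_eq SP rankpos_def case_prod_unfold)
  have lRfE: "lRf d (s i) bs Pl = lRb d P N s i" for i
    by (simp add: lRf_def lRb_def NFPE rankE)
  have lSfE: "lSf d (s i) Pl = lS d P s iou i" for i
    by (simp add: lSf_def lS_def sortnum_eq rankp_eq SP rankpos_def case_prod_unfold)
  have lStfE: "lStf d (s i) (iou i) Pl = lSt d P s iou i" for i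
    by (simp add: lStf_def lSt_def tnum_eq tden_eq SP case_prod_unfold)
  have pdenE: "pden d (s j) (iou j) Pl = (\<Sum>k\<in>P. Hstep d (s k - s j) * iv (iou k < iou j))" for j
    by (simp add: pden_eq SP case_prod_unfold)
  have npE: "np = real (card P)" by (simp add: np_def rlen_eq lenPl m_def)
  have lenG: "length G = length bs" by (simp add: G_def zeros_eq)
  have GE: "G ! k = (\<Sum>j\<in>P. lRb d P N s j / NFPb d P N s j * (bsize P N s (Suc k) * Hstep d (proto P N s (Suc k) - s j)))"
    if "k \<le> m" for k
  proof -
    have "G ! k = zeros bs ! k + sum_list (map (\<lambda>(i,si,ui).
       lRf d si bs Pl / nfp d si bs * (fst (bs ! k) * Hstep d (snd (bs ! k) - si))) Pl)"
      unfolding G_def by (rule accum_nth) (use that lenbs in \<open>auto simp: zeros_eq\<close>)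
    also have "\<dots> = (\<Sum>j\<in>P. lRb d P N s j / NFPb d P N s j * (bsize P N s (Suc k) * Hstep d (proto P N s (Suc k) - s j)))"
    proof -
      have z: "zeros bs ! k = 0" using that lenbs by (simp add: zeros_eq del: replicate_Suc)
      show ?thesis using that lenbs by (simp add: z SP lRfE NFPE bs_nth)
    qed
    finally show ?thesis .
  qed
  have assignE: "assign np L bs G = map (\<lambda>(x,sx). (x, G ! (cnt L sx) / (fst (bs ! (cnt L sx)) * np))) (negs L)"
    using assign_eq[OF sL, of 0 bs G np] lenbs lenG by (simp add: Pl_eq[symmetric] lenPl)
  have negval: "g = gneg d P N s x" if xg: "(x, g) \<in> set (assign np L bs G)" for x g
  proof -
    obtain sx where xs: "(x, sx) \<in> set (negs L)" and g: "g = G ! (cnt L sx) / (fst (bs ! (cnt L sx)) * np)"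
      using xg by (auto simp: assignE)
    have "(x, sx) \<in> set ns" using xs mNg by (metis set_mset_mset)
    then have xN: "x \<in> N" and sx: "sx = s x" using snl by (auto simp: ns_def)
    define k where "k = card {i\<in>P. s x \<le> s i}"
    have km: "k \<le> m" unfolding k_def m_def using finP by (intro card_mono) auto
    have bid: "bidx P s x = Suc k" by (simp add: bidx_def k_def)
    have "g = G ! k / (bsize P N s (Suc k) * real (card P))"
      using km by (simp add: g sx cntL k_def[symmetric] bs_nth npE)
    also have "\<dots> = gneg d P N s x"
      unfolding GE[OF km] gneg_def Let_def bid pkb_def by (rule alg)
    finally show ?thesis .
  qed
  have posv: "\<exists>i\<in>P. y = (i, s i, iou i)" if "y \<in> set Pl" for y
    using that setPl spl by (auto simp: ps_def)
  have fstAP: "map fst (posAP d np bs Pl Pl) = map fst Pl"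
    by (simp add: posAP_eq case_prod_unfold)
  have fstRS: "map fst (posRS d np bs Pl Q Pl) = map fst Pl"
    by (simp add: posRS_eq case_prod_unfold)
  have fstN: "map fst (assign np L bs G) = map fst (negs L)"
    by (simp add: assignE case_prod_unfold)
  have setNg: "set (negs L) = set ns" using mNg by (metis set_mset_mset)
  have mfst: "mset (map fst Pl @ map fst (negs L)) = mset (pl @ nl)"
  proof -
    have "mset (map fst Pl) = image_mset fst (mset ps)" by (simp add: mPl)
    also have "\<dots> = mset pl" by (simp add: ps_def multiset.map_comp o_def)
    finally have 1: "mset (map fst Pl) = mset pl" .
    have "mset (map fst (negs L)) = image_mset fst (mset ns)" by (simp add: mNg)
    also have "\<dots> = mset nl" by (simp add: ns_def multiset.map_comp o_def)
    finally have 2: "mset (map fst (negs L)) = mset nl" .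
    show ?thesis by (simp only: mset_append 1 2)
  qed
  have dist: "distinct (map fst Pl @ map fst (negs L))"
    using mset_eq_imp_distinct_iff[OF mfst] dpl dnl disj spl snl by auto
  have sets: "set (map fst Pl @ map fst (negs L)) = P \<union> N"
    using mfst spl snl by (metis set_append set_mset_mset)
  have gAPpos: "\<forall>(x, g) \<in> set (posAP d np bs Pl Pl). g = gAP d P N s x"
  proof (clarify)
    fix x g assume "(x, g) \<in> set (posAP d np bs Pl Pl)"
    then obtain si ui where y: "(x, si, ui) \<in> set Pl" and g: "g = (0 - lRf d si bs Pl) / np"
      by (auto simp: posAP_eq)
    obtain i where "i \<in> P" "(x, si, ui) = (i, s i, iou i)" using posv[OF y] by blast
    then show "g = gAP d P N s x" by (simp add: g gAP_def lRfE npE)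
  qed
  have gRSpos: "\<forall>(x, g) \<in> set (posRS d np bs Pl Q Pl). g = gRS d P N s iou x"
  proof (clarify)
    fix x g assume "(x, g) \<in> set (posRS d np bs Pl Q Pl)"
    then obtain si ui where y: "(x, si, ui) \<in> set Pl" and
      g: "g = (0 - lRf d si bs Pl + lStf d si ui Pl - lSf d si Pl + cross d si ui Q) / np"
      by (auto simp: posRS_eq)
    obtain i where iP: "i \<in> P" and e: "x = i" "si = s i" "ui = iou i" using posv[OF y] by blast
    have cr: "cross d (s i) (iou i) Q = (\<Sum>j\<in>P. (lS d P s iou j - lSt d P s iou j) * pS d P s iou i j)"
      by (simp add: cross_eq Q_def mkQ_eq o_def case_prod_unfold SP lSfE lStfE pdenE pS_def)
    have "g = (0 - lRb d P N s i + lSt d P s iou i - lS d P s iou i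
        + (\<Sum>j\<in>P. (lS d P s iou j - lSt d P s iou j) * pS d P s iou i j)) / real (card P)"
      unfolding g e(2,3) lRfE lSfE lStfE cr npE ..
    also have "\<dots> = (1 / real (card P)) * (- lRb d P N s i + lSt d P s iou i - lS d P s iou i
        + (\<Sum>j\<in>P. (lS d P s iou j - lSt d P s iou j) * pS d P s iou i j))"
      by (rule alg2)
    also have "\<dots> = gRS d P N s iou x" unfolding gRS_def e(1) using iP by simp
    finally show "g = gRS d P N s iou x" .
  qed
  have gAPneg: "\<forall>(x, g) \<in> set (assign np L bs G). g = gAP d P N s x"
  proof (clarify)
    fix x g assume a: "(x, g) \<in> set (assign np L bs G)"
    have "x \<in> set (map fst (assign np L bs G))" using a by force
    then have "x \<in> fst ` set ns" unfolding fstN set_map setNg .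
    then have "x \<in> N" using snl by (auto simp: ns_def)
    then have "x \<notin> P" using disj by auto
    then show "g = gAP d P N s x" using negval[OF a] by (simp add: gAP_def)
  qed
  have gRSneg: "\<forall>(x, g) \<in> set (assign np L bs G). g = gRS d P N s iou x"
  proof (clarify)
    fix x g assume a: "(x, g) \<in> set (assign np L bs G)"
    have "x \<in> set (map fst (assign np L bs G))" using a by force
    then have "x \<in> fst ` set ns" unfolding fstN set_map setNg .
    then have "x \<in> N" using snl by (auto simp: ns_def)
    then have "x \<notin> P" using disj by auto
    then show "g = gRS d P N s iou x" using negval[OF a] by (simp add: gRS_def)
  qed
  show ?thesis unfolding AP RS
    using dist sets fstAP fstRS fstN gAPpos gRSpos gAPneg gRSneg by auto
qed



lemma len_fst_split_pass: "length (fst (split_pass L b t bs ps)) = length (posl L) + 1 + length bs"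
proof (induction L arbitrary: b t bs ps)
  case (Cons a L)
  obtain i s p u where a: "a = (i,s,p,u)" by (cases a) auto
  show ?case using Cons by (cases p) (auto simp: a)
qed simp

lemma exk: "1 \<le> n \<Longrightarrow> \<exists>k::nat. n \<le> 2 ^ k \<and> real k \<le> log 2 (real n) + 1"
proof -
  assume n: "1 \<le> n"
  define k where "k = nat \<lceil>log 2 (real n)\<rceil>"
  have lg: "0 \<le> log 2 (real n)" using n by simp
  have k1: "real k = of_int \<lceil>log 2 (real n)\<rceil>" using lg by (simp add: k_def)
  have "real k \<le> log 2 (real n) + 1" unfolding k1 by linarith
  moreover have "real n \<le> 2 ^ k"
  proof -
    have "real n = 2 powr (log 2 (real n))" using n by simp
    also have "\<dots> \<le> 2 powr (real k)" unfolding k1 by (intro powr_mono) auto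
    also have "\<dots> = 2 ^ k" by (simp add: powr_realpow)
    finally show ?thesis .
  qed
  then have "n \<le> 2 ^ k" by (metis of_nat_le_iff of_nat_numeral of_nat_power)
  ultimately show ?thesis by blast
qed

lemma timeb:
  fixes P N :: "'a set" and s iou :: "'a \<Rightarrow> real" and d :: real and pl nl :: "'a list"
  assumes finP: "finite P" and finN: "finite N" and disj: "P \<inter> N = {}" and cP: "card P \<ge> 1"
    and dpl: "distinct pl" and spl: "set pl = P" and dnl: "distinct nl" and snl: "set nl = N"
  defines "ps \<equiv> map (\<lambda>i. (i, s i, iou i)) pl" and "ns \<equiv> map (\<lambda>i. (i, s i)) nl"
  shows "real (T_bucketed_AP d ps ns) \<le> 132 * max (real (card P + card N) * log 2 (real (card P + card N))) (real (card P) ^ 2) \<and>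
         real (T_bucketed_RS d ps ns) \<le> 132 * max (real (card P + card N) * log 2 (real (card P + card N))) (real (card P) ^ 2)"
proof -
  define A where "A = tagP ps @ tagN ns"
  define L where "L = msort A"
  define r where "r = split_pass L 0 0 [] []"
  define bs where "bs = itrev (fst r) []"
  define Pl where "Pl = itrev (snd r) []"
  define np where "np = rlen Pl"
  define G where "G = accum d bs Pl Pl (zeros bs)"
  define Q where "Q = mkQ d Pl Pl"
  define m where "m = card P"
  define n where "n = card P + card N"
  have lps: "length ps = m" using dpl spl by (simp add: ps_def m_def distinct_card[symmetric])
  have lns: "length ns = card N" using dnl snl by (simp add: ns_def distinct_card[symmetric])
  have lA: "length A = n" by (simp add: A_def tagP_eq tagN_eq lps lns n_def m_def)
  have lL: "length L = n" by (simp add: L_def lA)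
  have mL: "mset L = mset A" by (simp add: L_def)
  have Pl_eq: "Pl = posl L" by (simp add: Pl_def r_def snd_split_pass itrev_Nil)
  have lPl: "length Pl = m"
  proof -
    have "mset Pl = mset ps" using mset_posl[OF mL] by (simp add: Pl_eq A_def posl_tag)
    then show ?thesis using lps by (metis size_mset)
  qed
  have lfr: "length (fst r) = m + 1" using lPl by (simp add: r_def len_fst_split_pass Pl_eq)
  have lsr: "length (snd r) = m" using lPl by (simp add: Pl_def itrev_Nil)
  have lbs: "length bs = m + 1" using lfr by (simp add: bs_def itrev_Nil)
  have lQ: "length Q = m" by (simp add: Q_def mkQ_eq lPl)
  have lpa: "length (posAP d np bs Pl Pl) = m" by (simp add: posAP_eq lPl)
  have lpr: "length (posRS d np bs Pl Q Pl) = m" by (simp add: posRS_eq lPl)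
  have m1: "1 \<le> m" using cP by (simp add: m_def)
  have mn: "m \<le> n" by (simp add: m_def n_def)
  have n1: "1 \<le> n" using m1 mn by simp
  obtain k where k: "n \<le> 2 ^ k" "real k \<le> log 2 (real n) + 1" using exk[OF n1] by blast
  have ms: "T_msort A \<le> 7 * n * k + 3 * n" using T_msort_bound[of A k] lA n1 k(1) by simp
  have TAP: "T_bucketed_AP d ps ns = T_tagP ps + T_tagN ns + T_append (tagP ps) (tagN ns) + T_msort A
      + T_split_pass L 0 0 [] [] + T_fst r + T_itrev (fst r) [] + T_snd r + T_itrev (snd r) []
      + T_rlen Pl + T_zeros bs + T_accum d bs Pl Pl (zeros bs) + T_posAP d np bs Pl Pl
      + T_assign np L bs G + T_append (posAP d np bs Pl Pl) (assign np L bs G) + 1"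
    by (simp only: T_bucketed_AP_def Let_def A_def L_def r_def bs_def Pl_def np_def G_def)
  have TRS: "T_bucketed_RS d ps ns = T_tagP ps + T_tagN ns + T_append (tagP ps) (tagN ns) + T_msort A
      + T_split_pass L 0 0 [] [] + T_fst r + T_itrev (fst r) [] + T_snd r + T_itrev (snd r) []
      + T_rlen Pl + T_zeros bs + T_accum d bs Pl Pl (zeros bs) + T_mkQ d Pl Pl + T_posRS d np bs Pl Q Pl
      + T_assign np L bs G + T_append (posRS d np bs Pl Q Pl) (assign np L bs G) + 1"
    by (simp only: T_bucketed_RS_def Let_def A_def L_def r_def bs_def Pl_def np_def G_def Q_def)
  obtain fr sr where rr: "r = (fr, sr)" by (cases r) auto
  have basic: "T_tagP ps = m + 1" "T_tagN ns \<le> n + 1" "T_append (tagP ps) (tagN ns) = m + 1"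
     "T_split_pass L 0 0 [] [] = n + 1" "T_fst r = 0" "T_snd r = 0" "T_itrev (fst r) [] = m + 2"
     "T_itrev (snd r) [] = m + 1" "T_rlen Pl = m + 1" "T_zeros bs = m + 2"
     "T_assign np L bs G \<le> n + 1"
    using lps lns lL lfr lsr lPl lbs T_assign_le[of np L bs G]
    by (auto simp: T_tagP_eq T_tagN_eq T_append tagP_eq T_split_pass_eq rr T_itrev T_rlen_eq T_zeros_eq n_def)
  have acc: "T_accum d bs Pl Pl (zeros bs) \<le> m * (10 * m + 15) + 1"
    using T_accum_le[of d bs Pl Pl "zeros bs"] lbs lPl by (simp add: algebra_simps)
  have pap: "T_posAP d np bs Pl Pl \<le> m * (6 * m + 9) + 1"
    using T_posAP_le[of d np bs Pl Pl] lbs lPl by (simp add: algebra_simps)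
  have mkq: "T_mkQ d Pl Pl \<le> m * (13 * m + 8) + 1"
    using T_mkQ_le[of d Pl Pl] lPl by (simp add: algebra_simps)
  have prs: "T_posRS d np bs Pl Q Pl \<le> m * (19 * m + 16) + 1"
    using T_posRS_le[of d np bs Pl Q Pl] lbs lPl lQ by (simp add: algebra_simps)
  have ap1: "T_append (posAP d np bs Pl Pl) (assign np L bs G) = m + 1" by (simp add: T_append lpa)
  have ap2: "T_append (posRS d np bs Pl Q Pl) (assign np L bs G) = m + 1" by (simp add: T_append lpr)
  have bnat: "T_bucketed_AP d ps ns \<le> 7 * n * k + 6 * n + 42 * m * m + 50 * m + 20"
    "T_bucketed_RS d ps ns \<le> 7 * n * k + 6 * n + 42 * m * m + 50 * m + 20"
    unfolding TAP TRS using basic acc pap mkq prs ap1 ap2 ms by (simp_all add: algebra_simps)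
  define M where "M = max (real n * log 2 (real n)) (real m ^ 2)"
  have M1: "real n * log 2 (real n) \<le> M" "real m ^ 2 \<le> M" by (auto simp: M_def)
  have mm: "real m \<le> real m ^ 2" using m1 by (simp add: power2_eq_square)
  have rm1: "1 \<le> real m" using m1 by simp
  have one: "1 \<le> real m ^ 2" using mm rm1 by linarith
  have nM: "real n \<le> M"
  proof (cases "n = 1")
    case True
    then have "m = 1" using m1 mn by simp
    then show ?thesis using True M1 by simp
  next
    case False
    then have "2 \<le> real n" using n1 by simp
    then have "1 \<le> log 2 (real n)" by simp
    then have "real n * 1 \<le> real n * log 2 (real n)" using n1 by (intro mult_left_mono) auto
    then show ?thesis using M1 by simp
  qed
  have kk: "real n * real k \<le> real n * log 2 (real n) + real n"
    using mult_left_mono[OF k(2), of "real n"] by (simp add: algebra_simps)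
  have rb: "real (7 * n * k + 6 * n + 42 * m * m + 50 * m + 20) \<le> 132 * M"
  proof -
    have "real (7 * n * k + 6 * n + 42 * m * m + 50 * m + 20)
        = 7 * (real n * real k) + 6 * real n + 42 * real m ^ 2 + 50 * real m + 20"
      by (simp add: power2_eq_square)
    also have "\<dots> \<le> 7 * (real n * log 2 (real n)) + 13 * real n + 42 * real m ^ 2 + 50 * real m + 20"
      using kk by simp
    also have "\<dots> \<le> 132 * M" using M1 nM mm one by linarith
    finally show ?thesis .
  qed
  have f1: "real (T_bucketed_AP d ps ns) \<le> 132 * M"
    using order_trans[OF of_nat_mono[OF bnat(1)] rb] .
  have f2: "real (T_bucketed_RS d ps ns) \<le> 132 * M"
    using order_trans[OF of_nat_mono[OF bnat(2)] rb] .
  have "M = max (real (card P + card N) * log 2 (real (card P + card N))) (real (card P) ^ 2)"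
    by (simp only: M_def n_def m_def)
  then show ?thesis using f1 f2 by simp
qed



theorem theorem2:
  shows "\<exists>C :: real. \<forall>(P :: 'a set) (N :: 'a set) (s :: 'a \<Rightarrow> real) (iou :: 'a \<Rightarrow> real)
           (d :: real) (pl :: 'a list) (nl :: 'a list).
     finite P \<and> finite N \<and> P \<inter> N = {} \<and> card P \<ge> 1 \<and>
     (\<forall>i\<in>P. 0 \<le> iou i \<and> iou i \<le> 1) \<and> d \<ge> 0 \<and>
     distinct pl \<and> set pl = P \<and> distinct nl \<and> set nl = N \<longrightarrow>
     (let ps = map (\<lambda>i. (i, s i, iou i)) pl;
          ns = map (\<lambda>i. (i, s i)) nl;
          n = real (card P + card N);
          bound = C * max (n * log 2 n) (real (card P) ^ 2);
          outAP = bucketed_AP d ps ns;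
          outRS = bucketed_RS d ps ns
      in distinct (map fst outAP) \<and> set (map fst outAP) = P \<union> N \<and>
         (\<forall>(x, g) \<in> set outAP. g = gAP d P N s x) \<and>
         distinct (map fst outRS) \<and> set (map fst outRS) = P \<union> N \<and>
         (\<forall>(x, g) \<in> set outRS. g = gRS d P N s iou x) \<and>
         real (T_bucketed_AP d ps ns) \<le> bound \<and>
         real (T_bucketed_RS d ps ns) \<le> bound)"
proof (intro exI allI impI)
  fix P N :: "'a set" and s iou :: "'a \<Rightarrow> real" and d :: real and pl nl :: "'a list"
  assume h: "finite P \<and> finite N \<and> P \<inter> N = {} \<and> card P \<ge> 1 \<and>
     (\<forall>i\<in>P. 0 \<le> iou i \<and> iou i \<le> 1) \<and> d \<ge> 0 \<and>
     distinct pl \<and> set pl = P \<and> distinct nl \<and> set nl = N"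
  then have a: "finite P" "finite N" "P \<inter> N = {}" "card P \<ge> 1" "distinct pl" "set pl = P"
    "distinct nl" "set nl = N" by auto
  note M = main[OF a, where s=s and iou=iou and d=d]
  note T = timeb[OF a, where s=s and iou=iou and d=d]
  show "let ps = map (\<lambda>i. (i, s i, iou i)) pl;
          ns = map (\<lambda>i. (i, s i)) nl;
          n = real (card P + card N);
          bound = 132 * max (n * log 2 n) (real (card P) ^ 2);
          outAP = bucketed_AP d ps ns;
          outRS = bucketed_RS d ps ns
      in distinct (map fst outAP) \<and> set (map fst outAP) = P \<union> N \<and>
         (\<forall>(x, g) \<in> set outAP. g = gAP d P N s x) \<and>
         distinct (map fst outRS) \<and> set (map fst outRS) = P \<union> N \<and>
         (\<forall>(x, g) \<in> set outRS. g = gRS d P N s iou x) \<and>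
         real (T_bucketed_AP d ps ns) \<le> bound \<and>
         real (T_bucketed_RS d ps ns) \<le> bound"
    unfolding Let_def using M T by blast
qed


end
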